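(* In the setting below, suppose the execution is nonempty, its last transition belongs to a committed block, and no pair of consecutive transitions is swappable. Then every block is committed and every block is interference-free, i.e. the transitions of each block occupy a contiguous segment $t_i,t_{i+1},\dots,t_j$ of the execution.
   Context: **Setting.** An execution is a finite sequence $t_1,\dots,t_n$ of pairwise distinct transitions, with execution order $t_i<_E t_j$ iff $i<j$. - **Blocks.** The transitions are partitioned into blocks, and $\mathsf{block}(t)$ denotes the block containing $t$. Each block is either committed or uncommitted. - **Labels.** Each transition $t$ has a label $\mathit{label}(t)\in\{\mathbf R,\mathbf N,\mathbf L\}$. Every committed block contains exactly one transition labelled $\mathbf N$, called its commit transition; transitions of that block occurring before it (in $<_E$) are labelled $\mathbf R$, and those occurring after it are labelled $\mathbf L$. Every transition of an uncommitted block is labelled $\mathbf R$. - **Commit.** For $t$ in a committed block, $\mathsf{commit}(t)$ denotes the commit transition of $\mathsf{block}(t)$. - **Order on uncommitted blocks.** $<_O$ is a fixed strict total order on the uncommitted blocks. **Swappable pairs.** Two transitions $t_A=t_i$ and $t_B=t_{i+1}$ that are consecutive in the execution are swappable iff one of the following holds: 1. $t_A$ is in an uncommitted block and $t_B$ is in a committed block; 2. both are in committed blocks and $\mathsf{commit}(t_B)<_E\mathsf{commit}(t_A)$; 3. both are in uncommitted blocks and $\mathsf{block}(t_B)<_O\mathsf{block}(t_A)$. *)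

theory Defs
  imports Main
begin

text \<open>An execution is a list E of pairwise distinct transitions (of type 'a).
  blk maps each transition to its block (of type 'b); the blocks are the
  values of blk on set E. committed says whether a block is committed;
  label gives the label of a transition; ordO is the order on uncommitted blocks.\<close>

datatype lab = R | N | L

definition exec_before :: "'a list \<Rightarrow> 'a \<Rightarrow> 'a \<Rightarrow> bool" where
  "exec_before E x y \<longleftrightarrow> (\<exists>i j. i < j \<and> j < length E \<and> E ! i = x \<and> E ! j = y)"

definition commit_of :: "'a list \<Rightarrow> ('a \<Rightarrow> 'b) \<Rightarrow> ('a \<Rightarrow> lab) \<Rightarrow> 'a \<Rightarrow> 'a" where
  "commit_of E blk label t = (THE c. c \<in> set E \<and> blk c = blk t \<and> label c = N)"

definition well_labelled ::
  "'a list \<Rightarrow> ('a \<Rightarrow> 'b) \<Rightarrow> ('b \<Rightarrow> bool) \<Rightarrow> ('a \<Rightarrow> lab) \<Rightarrow> bool" where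
  "well_labelled E blk committed label \<longleftrightarrow>
     (\<forall>t\<in>set E. \<not> committed (blk t) \<longrightarrow> label t = R) \<and>
     (\<forall>b\<in>blk ` set E. committed b \<longrightarrow>
        (\<exists>!c. c \<in> set E \<and> blk c = b \<and> label c = N) \<and>
        (\<forall>c\<in>set E. blk c = b \<and> label c = N \<longrightarrow>
           (\<forall>t\<in>set E. blk t = b \<longrightarrow>
              (exec_before E t c \<longrightarrow> label t = R) \<and>
              (exec_before E c t \<longrightarrow> label t = L))))"

definition strict_total_on :: "'b set \<Rightarrow> ('b \<Rightarrow> 'b \<Rightarrow> bool) \<Rightarrow> bool" where
  "strict_total_on U r \<longleftrightarrow>
     (\<forall>x\<in>U. \<not> r x x) \<and>
     (\<forall>x\<in>U. \<forall>y\<in>U. \<forall>z\<in>U. r x y \<and> r y z \<longrightarrow> r x z) \<and>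
     (\<forall>x\<in>U. \<forall>y\<in>U. x \<noteq> y \<longrightarrow> r x y \<or> r y x)"

definition swappable ::
  "'a list \<Rightarrow> ('a \<Rightarrow> 'b) \<Rightarrow> ('b \<Rightarrow> bool) \<Rightarrow> ('a \<Rightarrow> lab) \<Rightarrow> ('b \<Rightarrow> 'b \<Rightarrow> bool) \<Rightarrow> nat \<Rightarrow> bool" where
  "swappable E blk committed label ordO i \<longleftrightarrow>
     Suc i < length E \<and>
     (let tA = E ! i; tB = E ! Suc i in
       (\<not> committed (blk tA) \<and> committed (blk tB)) \<or>
       (committed (blk tA) \<and> committed (blk tB) \<and>
          exec_before E (commit_of E blk label tB) (commit_of E blk label tA)) \<or>
       (\<not> committed (blk tA) \<and> \<not> committed (blk tB) \<and> ordO (blk tB) (blk tA)))"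

end

theory Submission
  imports Defs
begin

lemma exec_before_nth:
  assumes "distinct E" "a < length E" "b < length E"
  shows "exec_before E (E ! a) (E ! b) \<longleftrightarrow> a < b"
proof
  assume "exec_before E (E ! a) (E ! b)"
  then obtain i j where "i < j" "j < length E" "E ! i = E ! a" "E ! j = E ! b"
    unfolding exec_before_def by blast
  then show "a < b" proof -
    have "i = a" using \<open>E ! i = E ! a\<close> \<open>i < j\<close> \<open>j < length E\<close> assms nth_eq_iff_index_eq by fastforce
    moreover have "j = b" using \<open>E ! j = E ! b\<close> \<open>j < length E\<close> assms nth_eq_iff_index_eq by fastforce
    ultimately show ?thesis using \<open>i < j\<close> by simp
  qed
next
  assume "a < b" then show "exec_before E (E ! a) (E ! b)"
    unfolding exec_before_def using assms by blast
qed

lemma mono_steps: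
  fixes p :: "nat \<Rightarrow> nat"
  assumes "\<forall>i. Suc i < n \<longrightarrow> p i \<le> p (Suc i)"
  shows "i \<le> k \<Longrightarrow> k < n \<Longrightarrow> p i \<le> p k"
proof (induction k)
  case 0 then show ?case by simp
next
  case (Suc k)
  show ?case
  proof (cases "i = Suc k")
    case True then show ?thesis by simp
  next
    case False
    then have "p i \<le> p k" using Suc by simp
    also have "p k \<le> p (Suc k)" using assms Suc.prems by simp
    finally show ?thesis .
  qed
qed

lemma commit_props:
  assumes "well_labelled E blk committed label" "t \<in> set E" "committed (blk t)"
  shows "commit_of E blk label t \<in> set E \<and> blk (commit_of E blk label t) = blk t"
proof -
  have "\<exists>!c. c \<in> set E \<and> blk c = blk t \<and> label c = N"
    using assms unfolding well_labelled_def by blast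
  then have "?thesis" unfolding commit_of_def by (metis (mono_tags, lifting) theI')
  then show ?thesis .
qed

theorem mainTheorem7:
  fixes E :: "'a list" and blk :: "'a \<Rightarrow> 'b" and committed :: "'b \<Rightarrow> bool"
    and label :: "'a \<Rightarrow> lab" and ordO :: "'b \<Rightarrow> 'b \<Rightarrow> bool"
  assumes "distinct E"
    and "well_labelled E blk committed label"
    and "strict_total_on {b \<in> blk ` set E. \<not> committed b} ordO"
    and "E \<noteq> []"
    and "committed (blk (last E))"
    and "\<forall>i. Suc i < length E \<longrightarrow> \<not> swappable E blk committed label ordO i"
  shows "(\<forall>t\<in>set E. committed (blk t)) \<and>
         (\<forall>i j k. i \<le> k \<and> k \<le> j \<and> j < length E \<and> blk (E ! i) = blk (E ! j)
              \<longrightarrow> blk (E ! k) = blk (E ! i))"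
proof -
  have allc: "committed (blk (E ! i))" if "i < length E" for i
  proof (rule ccontr)
    assume nc: "\<not> committed (blk (E ! i))"
    have "\<forall>m. i + m < length E \<longrightarrow> \<not> committed (blk (E ! (i + m)))"
    proof
      fix m show "i + m < length E \<longrightarrow> \<not> committed (blk (E ! (i + m)))"
        using that
      proof (induction m)
        case 0 then show ?case using nc by simp
      next
        case (Suc m) then show ?case
          using assms(6) unfolding swappable_def Let_def by auto
      qed
    qed
    moreover have "i + (length E - 1 - i) = length E - 1" "length E - 1 < length E"
      using that assms(4) by auto
    ultimately have "\<not> committed (blk (E ! (length E - 1)))"
      by metis
    then show False using assms(4,5) by (simp add: last_conv_nth)
  qed
  have A: "\<forall>t\<in>set E. committed (blk t)" using allc by (metis in_set_conv_nth)
  define c where "c i = commit_of E blk label (E ! i)" for i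
  define p where "p i = (SOME m. m < length E \<and> E ! m = c i)" for i
  have pp: "p i < length E \<and> E ! p i = c i \<and> blk (c i) = blk (E ! i)" if "i < length E" for i
  proof -
    have "c i \<in> set E \<and> blk (c i) = blk (E ! i)"
      unfolding c_def using commit_props[OF assms(2)] allc that by simp
    then have "\<exists>m. m < length E \<and> E ! m = c i" "blk (c i) = blk (E ! i)"
      by (auto simp: in_set_conv_nth)
    then show ?thesis unfolding p_def by (metis (mono_tags, lifting) someI_ex)
  qed
  have mon: "\<forall>i. Suc i < length E \<longrightarrow> p i \<le> p (Suc i)"
  proof (intro allI impI)
    fix i assume i: "Suc i < length E"
    have "\<not> exec_before E (c (Suc i)) (c i)"
      using assms(6) i allc[of i] allc[of "Suc i"] unfolding swappable_def Let_def c_def by auto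
    then show "p i \<le> p (Suc i)"
      using exec_before_nth[OF assms(1), of "p (Suc i)" "p i"] pp[of i] pp[of "Suc i"] i by auto
  qed
  have B: "blk (E ! k) = blk (E ! i)" if "i \<le> k" "k \<le> j" "j < length E" "blk (E ! i) = blk (E ! j)" for i j k
  proof -
    have "c i = c j" unfolding c_def commit_of_def using that(4) by simp
    then have "p i = p j" using pp[of i] pp[of j] that nth_eq_iff_index_eq[OF assms(1), of "p i" "p j"] by auto
    moreover have "p i \<le> p k" "p k \<le> p j" using mono_steps[OF mon] that by auto
    ultimately have "p k = p i" by simp
    then have "c k = c i" using pp[of k] pp[of i] that by auto
    then show ?thesis using pp[of k] pp[of i] that by auto
  qed
  show ?thesis using A B by blast
qed

end
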